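(* (a) For any alphabet and any words $x,y$, if $y\in x\,\text{ш}\,x^R$ then $y$ is an abelian square. (b) If $y\in\{0,1\}^*$ is an abelian square, then there exists a word $x\in\{0,1\}^*$ such that $y\in x\,\text{ш}\,x^R$.
   Context: $x^R$ denotes the reversal of $x$. For words $x,y$, the (ordinary) shuffle $x \,\text{ш}\, y$ is the finite set of all words $z = x_1y_1x_2y_2\cdots x_ny_n$ for some $n\ge 1$ and words $x_1,\dots,x_n,y_1,\dots,y_n$ (possibly empty) with $x=x_1\cdots x_n$ and $y=y_1\cdots y_n$. An abelian square is a word of the form $uu'$ where $u'$ is a permutation (rearrangement of the letters) of $u$. *)

theory Defs
  imports Main "HOL-Library.Multiset"
begin

definition shuffle :: "'a list \<Rightarrow> 'a list \<Rightarrow> 'a list set" where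
  "shuffle x y = {z. \<exists>xs ys :: 'a list list.
      length xs \<ge> 1 \<and> length ys = length xs \<and>
      x = concat xs \<and> y = concat ys \<and>
      z = concat (map (\<lambda>(a, b). a @ b) (zip xs ys))}"

definition abelian_square :: "'a list \<Rightarrow> bool" where
  "abelian_square w \<longleftrightarrow> (\<exists>u u'. w = u @ u' \<and> mset u' = mset u)"

end

theory Submission
  imports Defs
begin

definition lab :: "'a list \<times> 'a list \<Rightarrow> ('a \<times> bool) list" where
  "lab p = map (\<lambda>c. (c, True)) (fst p) @ map (\<lambda>c. (c, False)) (snd p)"

lemma lab_props:
  "length xs = length ys \<Longrightarrow>
   map fst (concat (map lab (zip xs ys))) = concat (map (\<lambda>(a, b). a @ b) (zip xs ys)) \<and>
   map fst (filter snd (concat (map lab (zip xs ys)))) = concat xs \<and>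
   map fst (filter (\<lambda>p. \<not> snd p) (concat (map lab (zip xs ys)))) = concat ys"
proof (induction xs arbitrary: ys)
  case Nil then show ?case by simp
next
  case (Cons a xs)
  then obtain b ys' where "ys = b # ys'" by (cases ys) auto
  with Cons.prems Cons.IH[of ys'] show ?case by (simp add: lab_def filter_map comp_def)
qed

lemma shuffle_lab:
  assumes "z \<in> shuffle x y"
  shows "\<exists>ps. z = map fst ps \<and> x = map fst (filter snd ps) \<and> y = map fst (filter (\<lambda>p. \<not> snd p) ps)"
proof -
  obtain xs ys where h: "length ys = length xs" "x = concat xs" "y = concat ys"
    "z = concat (map (\<lambda>(a, b). a @ b) (zip xs ys))"
    using assms unfolding shuffle_def by blast
  show ?thesis using lab_props[of xs ys] h by (intro exI[of _ "concat (map lab (zip xs ys))"]) auto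
qed

lemma lab_shuffle:
  "map fst ps \<in> shuffle (map fst (filter snd ps)) (map fst (filter (\<lambda>p. \<not> snd p) ps))"
proof -
  define xs where "xs = map (\<lambda>p. if snd p then [fst p] else []) ps @ [[]]"
  define ys where "ys = map (\<lambda>p. if snd p then [] else [fst p]) ps @ [[]]"
  have l: "length ys = length xs" "length xs \<ge> 1" by (simp_all add: xs_def ys_def)
  have "concat xs = map fst (filter snd ps)" unfolding xs_def by (induction ps) auto
  moreover have "concat ys = map fst (filter (\<lambda>p. \<not> snd p) ps)" unfolding ys_def by (induction ps) auto
  moreover have "concat (map (\<lambda>(a, b). a @ b) (zip xs ys)) = map fst ps"
    unfolding xs_def ys_def by (induction ps) auto
  ultimately show ?thesis unfolding shuffle_def mem_Collect_eq using l
    by (intro exI[of _ xs] exI[of _ ys]) auto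
qed

lemma mset_split: "mset (map f xs) = mset (map f (filter P xs)) + mset (map f (filter (\<lambda>p. \<not> P p) xs))"
  by (induction xs) auto

lemma filter_take_prefix:
  "filter P (take n ps) = take (length (filter P (take n ps))) (filter P ps)"
proof -
  have "filter P ps = filter P (take n ps) @ filter P (drop n ps)"
    by (metis append_take_drop_id filter_append)
  then show ?thesis by (metis append_eq_conv_conj)
qed

lemma partA:
  assumes "y \<in> shuffle x (rev x)"
  shows "abelian_square y"
proof -
  obtain ps where ps: "y = map fst ps" "x = map fst (filter snd ps)"
    "rev x = map fst (filter (\<lambda>p. \<not> snd p) ps)"
    using shuffle_lab[OF assms] by blast
  define n where "n = length x"
  have len: "length ps = 2 * n"
    using sum_length_filter_compl[of snd ps] ps n_def
    by (metis length_map length_rev mult_2)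
  define i where "i = length (filter snd (take n ps))"
  define j where "j = length (filter (\<lambda>p. \<not> snd p) (take n ps))"
  have ij: "i + j = n" using sum_length_filter_compl[of snd "take n ps"] len
    unfolding i_def j_def by simp
  have A: "map fst (filter snd (take n ps)) = take i x"
    using ps(2) filter_take_prefix[of snd n ps] i_def by (metis take_map)
  have B: "map fst (filter (\<lambda>p. \<not> snd p) (take n ps)) = take j (rev x)"
    using ps(3) filter_take_prefix[of "\<lambda>p. \<not> snd p" n ps] j_def by (metis take_map)
  have tj: "take j (rev x) = rev (drop i x)" proof -
    have "length x - j = i" using ij n_def by simp
    thus ?thesis by (simp add: take_rev)
  qed
  have "mset (take n y) = mset (map fst (filter snd (take n ps))) + mset (map fst (filter (\<lambda>p. \<not> snd p) (take n ps)))"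
    using ps(1) mset_split[of fst "take n ps" snd] by (simp add: take_map)
  hence "mset (take n y) = mset (take i x) + mset (drop i x)"
    using A B tj by simp
  hence t: "mset (take n y) = mset x" by (metis append_take_drop_id mset_append)
  have "mset y = mset x + mset x"
  proof -
    have "mset y = mset x + mset (rev x)" using ps mset_split[of fst ps snd] by simp
    thus ?thesis by simp
  qed
  moreover have "mset y = mset (take n y) + mset (drop n y)"
    by (metis append_take_drop_id mset_append)
  ultimately have "mset (drop n y) = mset (take n y)" using t by simp
  thus ?thesis unfolding abelian_square_def by (metis append_take_drop_id)
qed

lemma allTrue: "\<forall>c\<in>set l. c \<Longrightarrow> l = replicate (length l) True"
  by (induction l) auto
lemma allFalse: "\<forall>c\<in>set l. \<not> c \<Longrightarrow> l = replicate (length l) False"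
  by (induction l) auto

lemma partB:
  assumes "abelian_square (y :: bool list)"
  shows "\<exists>x. y \<in> shuffle x (rev x)"
proof -
  obtain u u' where uu: "y = u @ u'" "mset u' = mset u"
    using assms unfolding abelian_square_def by blast
  define ps where "ps = map (\<lambda>c. (c, \<not> c)) u @ map (\<lambda>c. (c, c)) u'"
  have y: "y = map fst ps" using uu by (simp add: ps_def comp_def)
  have L: "map fst (filter snd ps) = filter Not u @ filter (\<lambda>c. c) u'"
    by (simp add: ps_def filter_map comp_def)
  have R: "map fst (filter (\<lambda>p. \<not> snd p) ps) = filter (\<lambda>c. c) u @ filter Not u'"
    by (simp add: ps_def filter_map comp_def)
  have e1: "length (filter Not u') = length (filter Not u)"
    by (metis uu(2) mset_filter size_mset)
  have e2: "length (filter (\<lambda>c. c) u') = length (filter (\<lambda>c. c) u)"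
    by (metis uu(2) mset_filter size_mset)
  have "rev (filter (\<lambda>c. c) u @ filter Not u') = filter Not u @ filter (\<lambda>c. c) u'"
  proof -
    have a: "filter (\<lambda>c. c) u = replicate (length (filter (\<lambda>c. c) u)) True"
      by (rule allTrue) simp
    have b: "filter (\<lambda>c. c) u' = replicate (length (filter (\<lambda>c. c) u)) True"
      using e2 allTrue[of "filter (\<lambda>c. c) u'"] by simp
    have c: "filter Not u' = replicate (length (filter Not u)) False"
      using e1 allFalse[of "filter Not u'"] by simp
    have d: "filter Not u = replicate (length (filter Not u)) False"
      by (rule allFalse) simp
    show ?thesis by (subst a, subst b, subst c, subst d) simp
  qed
  hence rv: "rev (map fst (filter snd ps)) = map fst (filter (\<lambda>p. \<not> snd p) ps)"
    using L R by (metis rev_rev_ident)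
  have "y \<in> shuffle (map fst (filter snd ps)) (rev (map fst (filter snd ps)))"
    unfolding rv y by (rule lab_shuffle)
  thus ?thesis by blast
qed

theorem mainTheorem4:
  shows "(\<forall>(x :: 'a list) y. y \<in> shuffle x (rev x) \<longrightarrow> abelian_square y)
    \<and> (\<forall>y :: bool list. abelian_square y \<longrightarrow> (\<exists>x. y \<in> shuffle x (rev x)))"
  using partA partB by blast

end
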